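(* Let $G$ be a finite metabelian group and $N$ a normal subgroup of $G$. Let $B$ be an abelian subgroup of $N$ of maximal order among abelian subgroups of $N$. Then $G$ contains a normal abelian subgroup $C$ with $C\le\langle B^G\rangle\le N$ and $|C|=|B|$.
   Context: A group is metabelian if its derived subgroup $[G,G]$ is abelian. $\langle B^G\rangle$ denotes the normal closure of $B$ in $G$, i.e. the subgroup generated by all conjugates $g^{-1}Bg$, $g\in G$. *)

theory Defs
  imports "HOL-Algebra.Algebra"
begin

definition metabelian :: "('a, 'b) monoid_scheme \<Rightarrow> bool" where
  "metabelian G \<longleftrightarrow> group G \<and>
     (\<forall>x \<in> derived G (carrier G). \<forall>y \<in> derived G (carrier G). x \<otimes>\<^bsub>G\<^esub> y = y \<otimes>\<^bsub>G\<^esub> x)"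

definition normal_closure :: "('a, 'b) monoid_scheme \<Rightarrow> 'a set \<Rightarrow> 'a set" where
  "normal_closure G B =
     generate G (\<Union>g \<in> carrier G. (\<lambda>b. inv\<^bsub>G\<^esub> g \<otimes>\<^bsub>G\<^esub> b \<otimes>\<^bsub>G\<^esub> g) ` B)"

definition abelian_set :: "('a, 'b) monoid_scheme \<Rightarrow> 'a set \<Rightarrow> bool" where
  "abelian_set G H \<longleftrightarrow> (\<forall>x \<in> H. \<forall>y \<in> H. x \<otimes>\<^bsub>G\<^esub> y = y \<otimes>\<^bsub>G\<^esub> x)"

end

theory Submission
  imports Defs
begin

context group begin

lemma gl1: "x \<in> carrier G \<Longrightarrow> y \<in> carrier G \<Longrightarrow> x \<otimes> (inv x \<otimes> y) = y"
  by (metis inv_closed m_assoc r_inv l_one)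
lemma gl2: "x \<in> carrier G \<Longrightarrow> y \<in> carrier G \<Longrightarrow> inv x \<otimes> (x \<otimes> y) = y"
  by (metis inv_closed m_assoc l_inv l_one)

lemmas gs = m_assoc gl1 gl2 inv_mult_group

lemma prod_card:
  assumes H: "subgroup H G" and K: "subgroup K G" and fin: "finite (carrier G)"
  shows "card (H <#> K) * card (H \<inter> K) = card H * card K"
proof -
  have Hc: "H \<subseteq> carrier G" and Kc: "K \<subseteq> carrier G" using H K subgroup.subset by auto
  have fH: "finite H" and fK: "finite K" using Hc Kc fin finite_subset by auto
  define F where "F x = {p \<in> H \<times> K. fst p \<otimes> snd p = x}" for x
  have U: "H \<times> K = (\<Union>x\<in>H <#> K. F x)"
  proof
    show "H \<times> K \<subseteq> (\<Union>x\<in>H <#> K. F x)"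
    proof
      fix p assume "p \<in> H \<times> K"
      then obtain h k where "p = (h,k)" "h \<in> H" "k \<in> K" by auto
      moreover have "h \<otimes> k \<in> H <#> K" using \<open>h \<in> H\<close> \<open>k \<in> K\<close> unfolding set_mult_def by blast
      ultimately show "p \<in> (\<Union>x\<in>H <#> K. F x)" unfolding F_def by auto
    qed
  qed (auto simp: F_def)
  have fHK: "finite (H <#> K)"
    using fin setmult_subset_G[OF Hc Kc] finite_subset by blast
  have fib: "card (F x) = card (H \<inter> K)" if x: "x \<in> H <#> K" for x
  proof -
    obtain h0 k0 where h0: "h0 \<in> H" and k0: "k0 \<in> K" and xe: "x = h0 \<otimes> k0"
      using x unfolding set_mult_def by auto
    have h0c: "h0 \<in> carrier G" and k0c: "k0 \<in> carrier G" using h0 k0 Hc Kc by auto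
    have "bij_betw (\<lambda>t. (h0 \<otimes> t, inv t \<otimes> k0)) (H \<inter> K) (F x)"
    proof (rule bij_betwI')
      fix s t assume st: "s \<in> H \<inter> K" "t \<in> H \<inter> K"
      have sc: "s \<in> carrier G" and tc: "t \<in> carrier G" using st Hc by auto
      have "h0 \<otimes> s = h0 \<otimes> t \<longleftrightarrow> s = t" using h0c sc tc by (metis gl2)
      then show "((h0 \<otimes> s, inv s \<otimes> k0) = (h0 \<otimes> t, inv t \<otimes> k0)) = (s = t)"
        unfolding prod.inject by blast
    next
      fix t assume t: "t \<in> H \<inter> K"
      then have tc: "t \<in> carrier G" using Hc by auto
      have "h0 \<otimes> t \<in> H" using t by (intro subgroup.m_closed[OF H h0]) auto
      moreover have "inv t \<otimes> k0 \<in> K" using t by (intro subgroup.m_closed[OF K _ k0] subgroup.m_inv_closed[OF K]) auto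
      moreover have "h0 \<otimes> t \<otimes> (inv t \<otimes> k0) = x"
        using h0c tc k0c xe by (simp add: gs)
      ultimately show "(h0 \<otimes> t, inv t \<otimes> k0) \<in> F x" unfolding F_def by auto
    next
      fix p assume p: "p \<in> F x"
      obtain h k where pe: "p = (h, k)" and h: "h \<in> H" and k: "k \<in> K" and e: "h \<otimes> k = x"
        using p unfolding F_def by auto
      have hc: "h \<in> carrier G" and kc: "k \<in> carrier G" using h k Hc Kc by auto
      define t where "t = inv h0 \<otimes> h"
      have tH: "t \<in> H" unfolding t_def by (intro subgroup.m_closed[OF H _ h] subgroup.m_inv_closed[OF H h0])
      have teq: "t = k0 \<otimes> inv k"
      proof -
        have "h0 \<otimes> k0 = h \<otimes> k" using e xe by simp
        then have "inv h0 \<otimes> (h0 \<otimes> k0) \<otimes> inv k = inv h0 \<otimes> (h \<otimes> k) \<otimes> inv k" by simp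
        then show ?thesis unfolding t_def using h0c k0c hc kc by (simp add: gs)
      qed
      have tK: "t \<in> K" unfolding teq by (intro subgroup.m_closed[OF K k0] subgroup.m_inv_closed[OF K k])
      have tc: "t \<in> carrier G" using tH Hc by auto
      have e1: "h0 \<otimes> t = h" unfolding t_def using h0c hc by (simp add: gs)
      have e2: "inv t \<otimes> k0 = k"
        using k0c kc by (simp add: teq gs)
      have eq: "p = (h0 \<otimes> t, inv t \<otimes> k0)" unfolding pe e1 e2 by (rule refl)
      have tHK: "t \<in> H \<inter> K" using tH tK by (rule IntI)
      show "\<exists>t\<in>H \<inter> K. p = (h0 \<otimes> t, inv t \<otimes> k0)" using tHK eq by (rule bexI[rotated])
    qed
    then show ?thesis by (simp add: bij_betw_same_card)
  qed
  have disj: "F x \<inter> F y = {}" if "x \<noteq> y" for x y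
    using that unfolding F_def by blast
  have finF: "finite (F x)" for x
    using finite_cartesian_product[OF fH fK] unfolding F_def by (rule finite_subset[rotated]) blast
  have "card H * card K = card (H \<times> K)" by (simp add: card_cartesian_product)
  also have "\<dots> = (\<Sum>x\<in>H <#> K. card (F x))"
    unfolding U
    by (rule card_UN_disjoint[OF fHK]) (use finF disj in blast)+
  also have "\<dots> = (\<Sum>x\<in>H <#> K. card (H \<inter> K))" using fib by simp
  finally show ?thesis by simp
qed

end

context group begin

lemma normalizing_mult_subgroup:
  assumes H: "subgroup H G" and K: "subgroup K G"
    and nk: "\<And>h k. h \<in> H \<Longrightarrow> k \<in> K \<Longrightarrow> h \<otimes> k \<otimes> inv h \<in> K"
  shows "subgroup (H <#> K) G"
proof -
  have Hc: "H \<subseteq> carrier G" and Kc: "K \<subseteq> carrier G" using H K subgroup.subset by auto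
  show ?thesis
  proof (rule subgroupI)
    show "H <#> K \<subseteq> carrier G" by (rule setmult_subset_G[OF Hc Kc])
    have "\<one> \<otimes> \<one> \<in> H <#> K" unfolding set_mult_def
      using subgroup.one_closed[OF H] subgroup.one_closed[OF K] by blast
    then show "H <#> K \<noteq> {}" by auto
  next
    fix x assume "x \<in> H <#> K"
    then obtain h k where h: "h \<in> H" and k: "k \<in> K" and xe: "x = h \<otimes> k"
      unfolding set_mult_def by auto
    have hc: "h \<in> carrier G" and kc: "k \<in> carrier G" using h k Hc Kc by auto
    have "inv x = inv h \<otimes> (h \<otimes> inv k \<otimes> inv h)"
      using hc kc xe by (simp add: gs)
    moreover have "inv h \<in> H" by (rule subgroup.m_inv_closed[OF H h])
    moreover have "h \<otimes> inv k \<otimes> inv h \<in> K" by (rule nk[OF h subgroup.m_inv_closed[OF K k]])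
    ultimately show "inv x \<in> H <#> K" unfolding set_mult_def by blast
  next
    fix x y assume "x \<in> H <#> K" "y \<in> H <#> K"
    then obtain h k h' k' where h: "h \<in> H" and k: "k \<in> K" and xe: "x = h \<otimes> k"
      and h': "h' \<in> H" and k': "k' \<in> K" and ye: "y = h' \<otimes> k'"
      unfolding set_mult_def by auto
    have hc: "h \<in> carrier G" and kc: "k \<in> carrier G" using h k Hc Kc by auto
    have hc': "h' \<in> carrier G" and kc': "k' \<in> carrier G" using h' k' Hc Kc by auto
    have "x \<otimes> y = (h \<otimes> h') \<otimes> ((inv h' \<otimes> k \<otimes> inv (inv h')) \<otimes> k')"
      using hc kc hc' kc' xe ye by (simp add: gs)
    moreover have "h \<otimes> h' \<in> H" by (rule subgroup.m_closed[OF H h h'])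
    moreover have "(inv h' \<otimes> k \<otimes> inv (inv h')) \<otimes> k' \<in> K"
      by (rule subgroup.m_closed[OF K nk[OF subgroup.m_inv_closed[OF H h'] k] k'])
    ultimately show "x \<otimes> y \<in> H <#> K" unfolding set_mult_def by blast
  qed
qed

lemma commuting_mult_subgroup:
  assumes H: "subgroup H G" and K: "subgroup K G"
    and cm: "\<And>h k. h \<in> H \<Longrightarrow> k \<in> K \<Longrightarrow> h \<otimes> k = k \<otimes> h"
  shows "subgroup (H <#> K) G"
proof (rule normalizing_mult_subgroup[OF H K])
  fix h k assume h: "h \<in> H" and k: "k \<in> K"
  have hc: "h \<in> carrier G" and kc: "k \<in> carrier G"
    using h k subgroup.subset[OF H] subgroup.subset[OF K] by auto
  have "h \<otimes> k \<otimes> inv h = k" using cm[OF h k] hc kc by (simp add: gs)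
  then show "h \<otimes> k \<otimes> inv h \<in> K" using k by simp
qed

lemma mult_in_subgroup:
  assumes S: "subgroup S G" and "H \<subseteq> S" and "K \<subseteq> S"
  shows "H <#> K \<subseteq> S"
proof
  fix x assume "x \<in> H <#> K"
  then obtain h k where "h \<in> H" "k \<in> K" "x = h \<otimes> k" unfolding set_mult_def by auto
  then show "x \<in> S" using assms subgroup.m_closed[OF S] by auto
qed

lemma left_in_mult:
  assumes "H \<subseteq> carrier G" and "subgroup K G" shows "H \<subseteq> H <#> K"
proof
  fix h assume h: "h \<in> H"
  have "h = h \<otimes> \<one>" using h assms(1) by auto
  then show "h \<in> H <#> K" unfolding set_mult_def using h subgroup.one_closed[OF assms(2)] by blast
qed

lemma right_in_mult:
  assumes "K \<subseteq> carrier G" and "subgroup H G" shows "K \<subseteq> H <#> K"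
proof
  fix k assume k: "k \<in> K"
  have "k = \<one> \<otimes> k" using k assms(1) by auto
  then show "k \<in> H <#> K" unfolding set_mult_def using k subgroup.one_closed[OF assms(2)] by blast
qed

lemma abelian_mult:
  assumes Hc: "H \<subseteq> carrier G" and Kc: "K \<subseteq> carrier G"
    and aH: "abelian_set G H" and aK: "abelian_set G K"
    and cm: "\<And>h k. h \<in> H \<Longrightarrow> k \<in> K \<Longrightarrow> h \<otimes> k = k \<otimes> h"
  shows "abelian_set G (H <#> K)"
  unfolding abelian_set_def
proof (intro ballI)
  fix x y assume "x \<in> H <#> K" "y \<in> H <#> K"
  then obtain h k h' k' where h: "h \<in> H" and k: "k \<in> K" and xe: "x = h \<otimes> k"
    and h': "h' \<in> H" and k': "k' \<in> K" and ye: "y = h' \<otimes> k'"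
    unfolding set_mult_def by auto
  have hc: "h \<in> carrier G" and kc: "k \<in> carrier G" using h k Hc Kc by auto
  have hc': "h' \<in> carrier G" and kc': "k' \<in> carrier G" using h' k' Hc Kc by auto
  have 1: "h \<otimes> h' = h' \<otimes> h" using aH h h' unfolding abelian_set_def by blast
  have 2: "k \<otimes> k' = k' \<otimes> k" using aK k k' unfolding abelian_set_def by blast
  have 3: "k \<otimes> h' = h' \<otimes> k" using cm[OF h' k] by simp
  have 4: "h \<otimes> k' = k' \<otimes> h" using cm[OF h k'] by simp
  have "x \<otimes> y = h \<otimes> (k \<otimes> h') \<otimes> k'" using xe ye hc kc hc' kc' by (simp add: m_assoc)
  also have "\<dots> = (h \<otimes> h') \<otimes> (k \<otimes> k')" using 3 hc kc hc' kc' by (simp add: m_assoc)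
  also have "\<dots> = (h' \<otimes> h) \<otimes> (k' \<otimes> k)" using 1 2 by simp
  also have "\<dots> = h' \<otimes> (h \<otimes> k') \<otimes> k" using hc kc hc' kc' by (simp add: m_assoc)
  also have "\<dots> = h' \<otimes> (k' \<otimes> h) \<otimes> k" using 4 by simp
  also have "\<dots> = y \<otimes> x" using xe ye hc kc hc' kc' by (simp add: m_assoc)
  finally show "x \<otimes> y = y \<otimes> x" .
qed

definition cent :: "'a set \<Rightarrow> 'a set \<Rightarrow> 'a set" where
  "cent B E = {c \<in> B. \<forall>e\<in>E. c \<otimes> e = e \<otimes> c}"

lemma cent_subgroup:
  assumes B: "subgroup B G" and Ec: "E \<subseteq> carrier G"
  shows "subgroup (cent B E) G"
proof -
  have Bc: "B \<subseteq> carrier G" using subgroup.subset[OF B] .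
  show ?thesis
  proof (rule subgroupI)
    show "cent B E \<subseteq> carrier G" using Bc unfolding cent_def by auto
    have "\<one> \<in> cent B E" unfolding cent_def using subgroup.one_closed[OF B] Ec by auto
    then show "cent B E \<noteq> {}" by auto
  next
    fix c assume c: "c \<in> cent B E"
    then have cB: "c \<in> B" and cc: "c \<in> carrier G" and ce: "\<And>e. e \<in> E \<Longrightarrow> c \<otimes> e = e \<otimes> c"
      using Bc unfolding cent_def by auto
    have "inv c \<otimes> e = e \<otimes> inv c" if e: "e \<in> E" for e
    proof -
      have ec: "e \<in> carrier G" using e Ec by auto
      have "inv c \<otimes> e = inv c \<otimes> (e \<otimes> c) \<otimes> inv c" using cc ec by (simp add: gs)
      also have "\<dots> = inv c \<otimes> (c \<otimes> e) \<otimes> inv c" using ce[OF e] by simp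
      also have "\<dots> = e \<otimes> inv c" using cc ec by (simp add: gs)
      finally show ?thesis .
    qed
    then show "inv c \<in> cent B E" unfolding cent_def using subgroup.m_inv_closed[OF B cB] by auto
  next
    fix c d assume "c \<in> cent B E" "d \<in> cent B E"
    then have cB: "c \<in> B" and cc: "c \<in> carrier G" and ce: "\<And>e. e \<in> E \<Longrightarrow> c \<otimes> e = e \<otimes> c"
      and dB: "d \<in> B" and dc: "d \<in> carrier G" and de: "\<And>e. e \<in> E \<Longrightarrow> d \<otimes> e = e \<otimes> d"
      using Bc unfolding cent_def by auto
    have "c \<otimes> d \<otimes> e = e \<otimes> (c \<otimes> d)" if e: "e \<in> E" for e
    proof -
      have ec: "e \<in> carrier G" using e Ec by auto
      have "c \<otimes> d \<otimes> e = c \<otimes> (d \<otimes> e)" using cc dc ec by (simp add: m_assoc)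
      also have "\<dots> = c \<otimes> (e \<otimes> d)" using de[OF e] by simp
      also have "\<dots> = (c \<otimes> e) \<otimes> d" using cc dc ec by (simp add: m_assoc)
      also have "\<dots> = (e \<otimes> c) \<otimes> d" using ce[OF e] by simp
      also have "\<dots> = e \<otimes> (c \<otimes> d)" using cc dc ec by (simp add: m_assoc)
      finally show ?thesis .
    qed
    then show "c \<otimes> d \<in> cent B E" unfolding cent_def using subgroup.m_closed[OF B cB dB] by auto
  qed
qed

end

context group begin

definition kap :: "'a \<Rightarrow> 'a \<Rightarrow> 'a" where "kap x y = x \<otimes> y \<otimes> inv x \<otimes> inv y"
definition sg :: "'a \<Rightarrow> 'a \<Rightarrow> 'a" where "sg g x = g \<otimes> x \<otimes> inv g"

lemma kap_closed: "x \<in> carrier G \<Longrightarrow> y \<in> carrier G \<Longrightarrow> kap x y \<in> carrier G"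
  unfolding kap_def by simp
lemma sg_closed: "x \<in> carrier G \<Longrightarrow> y \<in> carrier G \<Longrightarrow> sg x y \<in> carrier G"
  unfolding sg_def by simp

lemma I1: "h \<in> carrier G \<Longrightarrow> x \<in> carrier G \<Longrightarrow> y \<in> carrier G \<Longrightarrow> sg h (kap x y) = kap (sg h x) (sg h y)"
  unfolding sg_def kap_def by (simp add: gs)
lemma I2: "h \<in> carrier G \<Longrightarrow> b \<in> carrier G \<Longrightarrow> g \<in> carrier G \<Longrightarrow> sg h (kap b g) = inv (kap b h) \<otimes> kap b (h \<otimes> g)"
  unfolding sg_def kap_def by (simp add: gs)
lemma I3: "g \<in> carrier G \<Longrightarrow> b \<in> carrier G \<Longrightarrow> sg g b = b \<otimes> kap (inv b) g"
  unfolding sg_def kap_def by (simp add: gs)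
lemma I4: "g \<in> carrier G \<Longrightarrow> b \<in> carrier G \<Longrightarrow> kap b g = b \<otimes> sg g (inv b)"
  unfolding sg_def kap_def by (simp add: gs)
lemma I5: "k \<in> carrier G \<Longrightarrow> h \<in> carrier G \<Longrightarrow> x \<in> carrier G \<Longrightarrow> sg k (sg h x) = sg (k \<otimes> h) x"
  unfolding sg_def by (simp add: gs)
lemma I6: "h \<in> carrier G \<Longrightarrow> b \<in> carrier G \<Longrightarrow> g \<in> carrier G \<Longrightarrow> sg h (kap b g) = sg h b \<otimes> sg (h \<otimes> g) (inv b)"
  unfolding sg_def kap_def by (simp add: gs)
lemma I7: "h \<in> carrier G \<Longrightarrow> x \<in> carrier G \<Longrightarrow> y \<in> carrier G \<Longrightarrow> sg h (x \<otimes> y) = sg h x \<otimes> sg h y"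
  unfolding sg_def by (simp add: gs)
lemma I8: "h \<in> carrier G \<Longrightarrow> x \<in> carrier G \<Longrightarrow> inv (sg h x) = sg h (inv x)"
  unfolding sg_def by (simp add: gs)
lemma I9: "x \<in> carrier G \<Longrightarrow> sg \<one> x = x"
  unfolding sg_def by simp
lemma I10: "h \<in> carrier G \<Longrightarrow> sg h \<one> = \<one>"
  unfolding sg_def by simp
lemma I11: "h \<in> carrier G \<Longrightarrow> x \<in> carrier G \<Longrightarrow> sg h x = inv (inv h) \<otimes> x \<otimes> inv h"
  unfolding sg_def by simp

end

locale mt = group G for G (structure) +
  fixes N B :: "'a set"
  assumes fin: "finite (carrier G)"
    and met: "metabelian G"
    and nN: "N \<lhd> G" and sB: "subgroup B G" and BN: "B \<subseteq> N" and abB: "abelian_set G B"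
    and maxB: "\<And>A. subgroup A G \<Longrightarrow> A \<subseteq> N \<Longrightarrow> abelian_set G A \<Longrightarrow> card A \<le> card B"
begin

definition TT where "TT = {sg h (kap b g) | b h g. b \<in> B \<and> g \<in> carrier G \<and> h \<in> carrier G}"
definition DD where "DD = generate G TT"
definition XX where "XX = B \<inter> DD"
definition kk where "kk E = card (cent B E) * card E"
definition mm where "mm = card B * card XX"
definition intv where "intv E \<longleftrightarrow> subgroup E G \<and> XX \<subseteq> E \<and> E \<subseteq> DD"

lemma Bc: "B \<subseteq> carrier G" using subgroup.subset[OF sB] .
lemma sN: "subgroup N G" using normal_imp_subgroup[OF nN] .

lemma Tc: "TT \<subseteq> carrier G"
  unfolding TT_def using Bc by (auto intro!: sg_closed kap_closed)

lemma sD: "subgroup DD G" unfolding DD_def by (rule generate_is_subgroup[OF Tc])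
lemma Dc: "DD \<subseteq> carrier G" using subgroup.subset[OF sD] .

lemma nD: "DD \<lhd> G"
  unfolding DD_def
proof (rule normal_generateI[OF Tc])
  fix t x assume t: "t \<in> TT" and x: "x \<in> carrier G"
  then obtain b h g where b: "b \<in> B" and g: "g \<in> carrier G" and h: "h \<in> carrier G" and te: "t = sg h (kap b g)"
    unfolding TT_def by auto
  have "x \<otimes> t \<otimes> inv x = sg (x \<otimes> h) (kap b g)"
    unfolding te sg_def[of x, symmetric] using x h g b Bc by (simp add: I5 kap_closed subsetD)
  then show "x \<otimes> t \<otimes> inv x \<in> TT" unfolding TT_def using b g h x by blast
qed

lemma abD: "x \<in> DD \<Longrightarrow> y \<in> DD \<Longrightarrow> x \<otimes> y = y \<otimes> x"
proof -
  assume x: "x \<in> DD" and y: "y \<in> DD"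
  have "TT \<subseteq> derived_set G (carrier G)"
  proof
    fix t assume "t \<in> TT"
    then obtain b h g where b: "b \<in> B" and g: "g \<in> carrier G" and h: "h \<in> carrier G" and te: "t = sg h (kap b g)"
      unfolding TT_def by auto
    have bc: "b \<in> carrier G" using b Bc by auto
    have "t = kap (sg h b) (sg h g)" unfolding te using I1 h bc g by simp
    then have "t = sg h b \<otimes> sg h g \<otimes> inv (sg h b) \<otimes> inv (sg h g)" unfolding kap_def .
    moreover have "sg h b \<in> carrier G" "sg h g \<in> carrier G" using h bc g by (auto intro: sg_closed)
    ultimately show "t \<in> derived_set G (carrier G)" by blast
  qed
  then have "DD \<subseteq> derived G (carrier G)" unfolding DD_def derived_def by (rule mono_generate)
  then show ?thesis using met x y unfolding metabelian_def by blast
qed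

lemma kapD: "b \<in> B \<Longrightarrow> g \<in> carrier G \<Longrightarrow> kap b g \<in> DD"
proof -
  assume b: "b \<in> B" and g: "g \<in> carrier G"
  have "kap b g = sg \<one> (kap b g)" using b g Bc by (simp add: I9 kap_closed subsetD)
  then have "kap b g \<in> TT" unfolding TT_def using b g by blast
  then show ?thesis unfolding DD_def by (rule generate.incl)
qed

definition nc where "nc = normal_closure G B"

lemma ncgen: "(\<Union>g \<in> carrier G. (\<lambda>b. inv g \<otimes> b \<otimes> g) ` B) \<subseteq> carrier G"
  using Bc by auto

lemma snc: "subgroup nc G" unfolding nc_def normal_closure_def by (rule generate_is_subgroup[OF ncgen])

lemma sg_nc: "x \<in> carrier G \<Longrightarrow> b \<in> B \<Longrightarrow> sg x b \<in> nc"
proof -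
  assume x: "x \<in> carrier G" and b: "b \<in> B"
  have "sg x b = inv (inv x) \<otimes> b \<otimes> inv x" using I11 x b Bc by auto
  moreover have "inv x \<in> carrier G" using x by simp
  ultimately have "sg x b \<in> (\<Union>g \<in> carrier G. (\<lambda>b. inv g \<otimes> b \<otimes> g) ` B)" using b by blast
  then show ?thesis unfolding nc_def normal_closure_def by (rule generate.incl)
qed

lemma B_nc: "B \<subseteq> nc"
proof
  fix b assume b: "b \<in> B"
  have "b = sg \<one> b" using b Bc by (simp add: I9 subsetD)
  then show "b \<in> nc" using sg_nc[OF one_closed b] by simp
qed

lemma D_nc: "DD \<subseteq> nc"
  unfolding DD_def
proof (rule generate_subgroup_incl[OF _ snc])
  show "TT \<subseteq> nc"
  proof
    fix t assume "t \<in> TT"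
    then obtain b h g where b: "b \<in> B" and g: "g \<in> carrier G" and h: "h \<in> carrier G" and te: "t = sg h (kap b g)"
      unfolding TT_def by auto
    have bc: "b \<in> carrier G" using b Bc by auto
    have "t = sg h b \<otimes> sg (h \<otimes> g) (inv b)" unfolding te using I6 h bc g by simp
    moreover have "inv b \<in> B" using subgroup.m_inv_closed[OF sB b] .
    ultimately show "t \<in> nc" using sg_nc[OF h b] sg_nc[of "h \<otimes> g" "inv b"] h g
      subgroup.m_closed[OF snc] by simp
  qed
qed

lemma nc_N: "nc \<subseteq> N"
  unfolding nc_def normal_closure_def
proof (rule generate_subgroup_incl[OF _ sN])
  show "(\<Union>g \<in> carrier G. (\<lambda>b. inv g \<otimes> b \<otimes> g) ` B) \<subseteq> N"
  proof
    fix y assume "y \<in> (\<Union>g \<in> carrier G. (\<lambda>b. inv g \<otimes> b \<otimes> g) ` B)"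
    then obtain g b where g: "g \<in> carrier G" and b: "b \<in> B" and ye: "y = inv g \<otimes> b \<otimes> g" by auto
    have "inv g \<otimes> b \<otimes> inv (inv g) \<in> N"
      by (rule normal.inv_op_closed2[OF nN]) (use g b BN in auto)
    then show "y \<in> N" using ye g by simp
  qed
qed

lemma DN: "DD \<subseteq> N" using D_nc nc_N by blast

lemma finS: "S \<subseteq> carrier G \<Longrightarrow> finite S" using fin finite_subset by blast

end

context mt begin

lemma sX: "subgroup XX G" unfolding XX_def by (rule subgroups_Inter_pair[OF sB sD])
lemma oneX: "\<one> \<in> XX" using subgroup.one_closed[OF sX] .
lemma cardB_pos: "card B > 0" using subgroup.finite_imp_card_positive[OF sB fin] .
lemma cardX_pos: "card XX > 0" using subgroup.finite_imp_card_positive[OF sX fin] .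
lemma mm_pos: "mm > 0" unfolding mm_def using cardB_pos cardX_pos by simp

lemma cent_sub: "cent B E \<subseteq> B" unfolding cent_def by auto

lemma K1:
  assumes E: "intv E"
  shows "card (cent B E <#> E) * card XX = kk E" and "kk E \<le> mm"
proof -
  have sE: "subgroup E G" and XE: "XX \<subseteq> E" and ED: "E \<subseteq> DD" using E unfolding intv_def by auto
  have Ec: "E \<subseteq> carrier G" using ED Dc by auto
  have sC: "subgroup (cent B E) G" by (rule cent_subgroup[OF sB Ec])
  have cm: "c \<otimes> e = e \<otimes> c" if "c \<in> cent B E" "e \<in> E" for c e
    using that unfolding cent_def by auto
  have sP: "subgroup (cent B E <#> E) G" by (rule commuting_mult_subgroup[OF sC sE cm])
  have aC: "abelian_set G (cent B E)" using abB cent_sub unfolding abelian_set_def by blast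
  have aE: "abelian_set G E" using abD ED unfolding abelian_set_def by blast
  have aP: "abelian_set G (cent B E <#> E)"
    by (rule abelian_mult[OF subgroup.subset[OF sC] Ec aC aE cm])
  have PN: "cent B E <#> E \<subseteq> N"
    by (rule mult_in_subgroup[OF sN]) (use cent_sub BN ED DN in auto)
  have le: "card (cent B E <#> E) \<le> card B" by (rule maxB[OF sP PN aP])
  have int: "cent B E \<inter> E = XX"
  proof
    show "cent B E \<inter> E \<subseteq> XX" using cent_sub ED unfolding XX_def by auto
    show "XX \<subseteq> cent B E \<inter> E"
    proof
      fix x assume x: "x \<in> XX"
      have "x \<otimes> e = e \<otimes> x" if "e \<in> E" for e using abD x that ED unfolding XX_def by auto
      then show "x \<in> cent B E \<inter> E" using x XE unfolding XX_def cent_def by auto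
    qed
  qed
  have pc: "card (cent B E <#> E) * card (cent B E \<inter> E) = card (cent B E) * card E"
    by (rule prod_card[OF sC sE fin])
  then show 1: "card (cent B E <#> E) * card XX = kk E" unfolding kk_def int .
  have "card (cent B E <#> E) * card XX \<le> card B * card XX" using le by simp
  then show "kk E \<le> mm" unfolding mm_def 1 .
qed

lemma cent_mono: "E1 \<subseteq> E2 \<Longrightarrow> cent B E2 \<subseteq> cent B E1"
  unfolding cent_def by auto

lemma K2:
  assumes E1: "intv E1" and E2: "intv E2"
  shows "intv (E1 <#> E2)" and "intv (E1 \<inter> E2)"
    and "kk E1 * kk E2 \<le> kk (E1 <#> E2) * kk (E1 \<inter> E2)"
proof -
  have sE1: "subgroup E1 G" and XE1: "XX \<subseteq> E1" and ED1: "E1 \<subseteq> DD" using E1 unfolding intv_def by auto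
  have sE2: "subgroup E2 G" and XE2: "XX \<subseteq> E2" and ED2: "E2 \<subseteq> DD" using E2 unfolding intv_def by auto
  have Ec1: "E1 \<subseteq> carrier G" and Ec2: "E2 \<subseteq> carrier G" using ED1 ED2 Dc by auto
  have cm: "x \<otimes> y = y \<otimes> x" if "x \<in> E1" "y \<in> E2" for x y using abD that ED1 ED2 by auto
  have sU: "subgroup (E1 <#> E2) G" by (rule commuting_mult_subgroup[OF sE1 sE2 cm])
  have UD: "E1 <#> E2 \<subseteq> DD" by (rule mult_in_subgroup[OF sD ED1 ED2])
  have E1U: "E1 \<subseteq> E1 <#> E2" by (rule left_in_mult[OF Ec1 sE2])
  have E2U: "E2 \<subseteq> E1 <#> E2" by (rule right_in_mult[OF Ec2 sE1])
  show "intv (E1 <#> E2)" unfolding intv_def using sU UD E1U XE1 by auto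
  have sI: "subgroup (E1 \<inter> E2) G" by (rule subgroups_Inter_pair[OF sE1 sE2])
  show "intv (E1 \<inter> E2)" unfolding intv_def using sI XE1 XE2 ED1 by auto
  have sC1: "subgroup (cent B E1) G" by (rule cent_subgroup[OF sB Ec1])
  have sC2: "subgroup (cent B E2) G" by (rule cent_subgroup[OF sB Ec2])
  have cU: "cent B (E1 <#> E2) = cent B E1 \<inter> cent B E2"
  proof
    show "cent B (E1 <#> E2) \<subseteq> cent B E1 \<inter> cent B E2" using cent_mono[OF E1U] cent_mono[OF E2U] by auto
    show "cent B E1 \<inter> cent B E2 \<subseteq> cent B (E1 <#> E2)"
    proof
      fix c assume c: "c \<in> cent B E1 \<inter> cent B E2"
      have cc: "c \<in> carrier G" using c cent_sub Bc by auto
      have "c \<otimes> u = u \<otimes> c" if u: "u \<in> E1 <#> E2" for u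
      proof -
        obtain x y where x: "x \<in> E1" and y: "y \<in> E2" and ue: "u = x \<otimes> y"
          using u unfolding set_mult_def by auto
        have xc: "x \<in> carrier G" and yc: "y \<in> carrier G" using x y Ec1 Ec2 by auto
        have 1: "c \<otimes> x = x \<otimes> c" using c x unfolding cent_def by auto
        have 2: "c \<otimes> y = y \<otimes> c" using c y unfolding cent_def by auto
        have "c \<otimes> u = (c \<otimes> x) \<otimes> y" using ue cc xc yc by (simp add: m_assoc)
        also have "\<dots> = x \<otimes> (c \<otimes> y)" using 1 cc xc yc by (simp add: m_assoc)
        also have "\<dots> = x \<otimes> (y \<otimes> c)" using 2 by simp
        also have "\<dots> = u \<otimes> c" using ue cc xc yc by (simp add: m_assoc)
        finally show ?thesis .
      qed
      then show "c \<in> cent B (E1 <#> E2)" using c unfolding cent_def by auto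
    qed
  qed
  have cI: "cent B E1 <#> cent B E2 \<subseteq> cent B (E1 \<inter> E2)"
    by (rule mult_in_subgroup[OF cent_subgroup[OF sB]]) (use Ec1 cent_mono[of "E1 \<inter> E2" E1] cent_mono[of "E1 \<inter> E2" E2] in auto)
  have fcI: "finite (cent B (E1 \<inter> E2))" using finS cent_sub Bc by blast
  have le1: "card (cent B E1 <#> cent B E2) \<le> card (cent B (E1 \<inter> E2))" by (rule card_mono[OF fcI cI])
  have p1: "card (cent B E1 <#> cent B E2) * card (cent B E1 \<inter> cent B E2) = card (cent B E1) * card (cent B E2)"
    by (rule prod_card[OF sC1 sC2 fin])
  have p2: "card (E1 <#> E2) * card (E1 \<inter> E2) = card E1 * card E2"
    by (rule prod_card[OF sE1 sE2 fin])
  define a1 where "a1 = card (cent B E1)"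
  define a2 where "a2 = card (cent B E2)"
  define ai where "ai = card (cent B E1 \<inter> cent B E2)"
  define au where "au = card (cent B E1 <#> cent B E2)"
  define cc where "cc = card (cent B (E1 \<inter> E2))"
  define e1 where "e1 = card E1"
  define e2 where "e2 = card E2"
  define eu where "eu = card (E1 <#> E2)"
  define ei where "ei = card (E1 \<inter> E2)"
  have "kk E1 * kk E2 = (a1 * a2) * (e1 * e2)" unfolding kk_def a1_def a2_def e1_def e2_def by simp
  also have "\<dots> = (au * ai) * (eu * ei)" using p1 p2 unfolding a1_def a2_def e1_def e2_def au_def ai_def eu_def ei_def by simp
  also have "\<dots> = (ai * eu) * (au * ei)" by simp
  also have "\<dots> \<le> (ai * eu) * (cc * ei)" using le1 unfolding au_def cc_def by simp
  also have "\<dots> = kk (E1 <#> E2) * kk (E1 \<inter> E2)" unfolding kk_def cU ai_def eu_def cc_def ei_def by simp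
  finally show "kk E1 * kk E2 \<le> kk (E1 <#> E2) * kk (E1 \<inter> E2)" .
qed

lemma K3:
  assumes E1: "intv E1" and E2: "intv E2" and k1: "kk E1 = mm" and k2: "kk E2 = mm"
  shows "intv (E1 <#> E2)" and "kk (E1 <#> E2) = mm"
proof -
  show iU: "intv (E1 <#> E2)" by (rule K2(1)[OF E1 E2])
  have iI: "intv (E1 \<inter> E2)" by (rule K2(2)[OF E1 E2])
  have u: "kk (E1 <#> E2) \<le> mm" by (rule K1(2)[OF iU])
  have v: "kk (E1 \<inter> E2) \<le> mm" by (rule K1(2)[OF iI])
  have uv: "mm * mm \<le> kk (E1 <#> E2) * kk (E1 \<inter> E2)" using K2(3)[OF E1 E2] k1 k2 by simp
  show "kk (E1 <#> E2) = mm"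
  proof (rule ccontr)
    assume "kk (E1 <#> E2) \<noteq> mm"
    then have lt: "kk (E1 <#> E2) < mm" using u by simp
    have "kk (E1 <#> E2) * kk (E1 \<inter> E2) \<le> kk (E1 <#> E2) * mm" using v by simp
    also have "\<dots> < mm * mm" using lt mm_pos by simp
    finally show False using uv by simp
  qed
qed

end

context mt begin

lemma conj_subgroup:
  assumes g: "g \<in> carrier G" shows "subgroup (sg g ` B) G"
proof (rule subgroupI)
  show "sg g ` B \<subseteq> carrier G" using g Bc by (auto intro: sg_closed)
  show "sg g ` B \<noteq> {}" using subgroup.one_closed[OF sB] by auto
next
  fix x assume "x \<in> sg g ` B"
  then obtain b where b: "b \<in> B" and xe: "x = sg g b" by auto
  have "inv x = sg g (inv b)" using xe I8 g b Bc by auto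
  then show "inv x \<in> sg g ` B" using subgroup.m_inv_closed[OF sB b] by auto
next
  fix x y assume "x \<in> sg g ` B" "y \<in> sg g ` B"
  then obtain b b' where b: "b \<in> B" and xe: "x = sg g b" and b': "b' \<in> B" and ye: "y = sg g b'" by auto
  have bc: "b \<in> carrier G" and bc': "b' \<in> carrier G" using b b' Bc by auto
  have "x \<otimes> y = sg g (b \<otimes> b')" using xe ye I7[OF g bc bc'] by simp
  then show "x \<otimes> y \<in> sg g ` B" using subgroup.m_closed[OF sB b b'] by auto
qed

lemma conj_abelian:
  assumes g: "g \<in> carrier G" shows "abelian_set G (sg g ` B)"
  unfolding abelian_set_def
proof (intro ballI)
  fix x y assume "x \<in> sg g ` B" "y \<in> sg g ` B"
  then obtain b b' where b: "b \<in> B" and xe: "x = sg g b" and b': "b' \<in> B" and ye: "y = sg g b'" by auto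
  have bc: "b \<in> carrier G" and bc': "b' \<in> carrier G" using b b' Bc by auto
  have "x \<otimes> y = sg g (b \<otimes> b')" using xe ye I7 g bc bc' by auto
  also have "\<dots> = sg g (b' \<otimes> b)" using abB b b' unfolding abelian_set_def by auto
  also have "\<dots> = y \<otimes> x" using xe ye I7 g bc bc' by auto
  finally show "x \<otimes> y = y \<otimes> x" .
qed

lemma conj_card:
  assumes g: "g \<in> carrier G" shows "card (sg g ` B) = card B"
proof (rule card_image)
  show "inj_on (sg g) B"
  proof
    fix x y assume x: "x \<in> B" and y: "y \<in> B" and e: "sg g x = sg g y"
    have xc: "x \<in> carrier G" and yc: "y \<in> carrier G" using x y Bc by auto
    have "x = inv g \<otimes> (sg g x) \<otimes> g" unfolding sg_def using g xc by (simp add: gs)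
    also have "\<dots> = inv g \<otimes> (sg g y) \<otimes> g" using e by simp
    also have "\<dots> = y" unfolding sg_def using g yc by (simp add: gs)
    finally show "x = y" .
  qed
qed

lemma K4:
  assumes g: "g \<in> carrier G"
  shows "\<exists>E. intv E \<and> kk E = mm \<and> (\<forall>b\<in>B. kap b g \<in> E)"
proof -
  define Bg where "Bg = sg g ` B"
  have Bgc: "Bg \<subseteq> carrier G" using subgroup.subset[OF conj_subgroup[OF g]] unfolding Bg_def .
  define Kg where "Kg = generate G (B \<union> Bg)"
  have sK: "subgroup Kg G" unfolding Kg_def by (rule generate_is_subgroup) (use Bc Bgc in auto)
  have BK: "B \<subseteq> Kg" unfolding Kg_def using generate.incl[of _ "B \<union> Bg" G] by blast
  have BgK: "Bg \<subseteq> Kg" unfolding Kg_def using generate.incl[of _ "B \<union> Bg" G] by blast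
  define Eg where "Eg = DD \<inter> Kg"
  have sE: "subgroup Eg G" unfolding Eg_def by (rule subgroups_Inter_pair[OF sD sK])
  have iE: "intv Eg" unfolding intv_def Eg_def using sE BK unfolding Eg_def XX_def by auto
  have kapE: "kap b g \<in> Eg" if b: "b \<in> B" for b
  proof -
    have bc: "b \<in> carrier G" using b Bc by auto
    have "kap b g = b \<otimes> sg g (inv b)" by (rule I4[OF g bc])
    moreover have "sg g (inv b) \<in> Kg" using BgK subgroup.m_inv_closed[OF sB b] unfolding Bg_def by auto
    ultimately have "kap b g \<in> Kg" using subgroup.m_closed[OF sK] BK b by auto
    then show ?thesis unfolding Eg_def using kapD[OF b g] by auto
  qed
  have Ec: "Eg \<subseteq> carrier G" using subgroup.subset[OF sE] .
  have sBE: "subgroup (B <#> Eg) G"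
  proof (rule normalizing_mult_subgroup[OF sB sE])
    fix b e assume b: "b \<in> B" and e: "e \<in> Eg"
    have "b \<otimes> e \<otimes> inv b \<in> DD" using normal.inv_op_closed2[OF nD] b e Bc unfolding Eg_def by auto
    moreover have "b \<otimes> e \<otimes> inv b \<in> Kg"
    proof -
      have "b \<in> Kg" "e \<in> Kg" "inv b \<in> Kg" using b e BK subgroup.m_inv_closed[OF sK] unfolding Eg_def by auto
      then show ?thesis using subgroup.m_closed[OF sK] by auto
    qed
    ultimately show "b \<otimes> e \<otimes> inv b \<in> Eg" unfolding Eg_def by auto
  qed
  have BgBE: "Bg \<subseteq> B <#> Eg"
  proof
    fix x assume "x \<in> Bg"
    then obtain b where b: "b \<in> B" and xe: "x = sg g b" unfolding Bg_def by auto
    have bc: "b \<in> carrier G" using b Bc by auto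
    have "x = b \<otimes> kap (inv b) g" using xe I3[OF g bc] by simp
    moreover have "kap (inv b) g \<in> Eg" using kapE subgroup.m_inv_closed[OF sB b] by auto
    ultimately show "x \<in> B <#> Eg" unfolding set_mult_def using b by auto
  qed
  have BBE: "B \<subseteq> B <#> Eg" by (rule left_in_mult[OF Bc sE])
  have sub: "B <#> Bg \<subseteq> B <#> Eg" by (rule mult_in_subgroup[OF sBE BBE BgBE])
  have le1: "card (B <#> Bg) \<le> card (B <#> Eg)"
    by (rule card_mono[OF finS[OF subgroup.subset[OF sBE]] sub])
  have sBg: "subgroup Bg G" unfolding Bg_def by (rule conj_subgroup[OF g])
  have p1: "card (B <#> Bg) * card (B \<inter> Bg) = card B * card B"
    using prod_card[OF sB sBg fin] conj_card[OF g] unfolding Bg_def by simp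
  have p2: "card (B <#> Eg) * card (B \<inter> Eg) = card B * card Eg"
    by (rule prod_card[OF sB sE fin])
  have BE: "B \<inter> Eg = XX" unfolding Eg_def XX_def using BK by auto
  have cent_in: "B \<inter> Bg \<subseteq> cent B Eg"
  proof
    fix c assume c: "c \<in> B \<inter> Bg"
    have cc: "c \<in> carrier G" using c Bc by auto
    have sZ: "subgroup (cent (carrier G) {c}) G" by (rule cent_subgroup[OF subgroup_self]) (use cc in auto)
    have "B \<union> Bg \<subseteq> cent (carrier G) {c}"
    proof -
      have "x \<otimes> c = c \<otimes> x" if "x \<in> B" for x using abB c that unfolding abelian_set_def by auto
      moreover have "x \<otimes> c = c \<otimes> x" if "x \<in> Bg" for x
        using conj_abelian[OF g] c that unfolding abelian_set_def Bg_def by auto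
      ultimately show ?thesis unfolding cent_def using Bc Bgc by auto
    qed
    then have "Kg \<subseteq> cent (carrier G) {c}" unfolding Kg_def by (rule generate_subgroup_incl[OF _ sZ])
    then have "c \<otimes> e = e \<otimes> c" if "e \<in> Eg" for e using that unfolding Eg_def cent_def by auto
    then show "c \<in> cent B Eg" unfolding cent_def using c by auto
  qed
  have le2: "card (B \<inter> Bg) \<le> card (cent B Eg)"
    by (rule card_mono[OF finS cent_in]) (use cent_sub Bc in auto)
  have "card B * mm = card B * card B * card XX" unfolding mm_def by simp
  also have "\<dots> = card (B <#> Bg) * card (B \<inter> Bg) * card XX" using p1 by simp
  also have "\<dots> \<le> card (B <#> Eg) * card (cent B Eg) * card XX"
    using le1 le2 by (intro mult_le_mono mult_le_mono1) auto
  also have "\<dots> = card B * kk Eg" using p2 unfolding BE kk_def by (simp add: ac_simps)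
  finally have "mm \<le> kk Eg" using cardB_pos by simp
  then have "kk Eg = mm" using K1(2)[OF iE] by simp
  then show ?thesis using iE kapE by blast
qed

lemma K5:
  assumes "finite F" "F \<subseteq> carrier G"
  shows "\<exists>E. intv E \<and> kk E = mm \<and> (\<forall>g\<in>F. \<forall>b\<in>B. kap b g \<in> E)"
  using assms
proof (induction F rule: finite_induct)
  case empty
  have iX: "intv XX" unfolding intv_def using sX unfolding XX_def by auto
  have "cent B XX = B"
  proof
    show "cent B XX \<subseteq> B" by (rule cent_sub)
    show "B \<subseteq> cent B XX" using abB unfolding cent_def abelian_set_def XX_def by auto
  qed
  then have "kk XX = mm" unfolding kk_def mm_def by simp
  then show ?case using iX by blast
next
  case (insert g F)
  then obtain E where E: "intv E" "kk E = mm" "\<forall>g\<in>F. \<forall>b\<in>B. kap b g \<in> E" by auto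
  have g: "g \<in> carrier G" using insert by auto
  obtain E' where E': "intv E'" "kk E' = mm" "\<forall>b\<in>B. kap b g \<in> E'" using K4[OF g] by blast
  have i: "intv (E <#> E')" and k: "kk (E <#> E') = mm" using K3[OF E(1) E'(1) E(2) E'(2)] by auto
  have Ec: "E \<subseteq> carrier G" and Ec': "E' \<subseteq> carrier G" using E(1) E'(1) Dc unfolding intv_def by auto
  have sE: "subgroup E G" and sE': "subgroup E' G" using E(1) E'(1) unfolding intv_def by auto
  have "E \<subseteq> E <#> E'" by (rule left_in_mult[OF Ec sE'])
  moreover have "E' \<subseteq> E <#> E'" by (rule right_in_mult[OF Ec' sE])
  ultimately have "\<forall>h\<in>insert g F. \<forall>b\<in>B. kap b h \<in> E <#> E'" using E(3) E'(3) by blast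
  then show ?case using i k by blast
qed

theorem main: "\<exists>C. C \<lhd> G \<and> abelian_set G C \<and> C \<subseteq> normal_closure G B
             \<and> normal_closure G B \<subseteq> N \<and> card C = card B"
proof -
  obtain E where E: "intv E" "kk E = mm" "\<forall>g\<in>carrier G. \<forall>b\<in>B. kap b g \<in> E"
    using K5[OF fin subset_refl] by blast
  have sE: "subgroup E G" and ED: "E \<subseteq> DD" using E(1) unfolding intv_def by auto
  have "TT \<subseteq> E"
  proof
    fix t assume "t \<in> TT"
    then obtain b h g where b: "b \<in> B" and g: "g \<in> carrier G" and h: "h \<in> carrier G" and te: "t = sg h (kap b g)"
      unfolding TT_def by auto
    have bc: "b \<in> carrier G" using b Bc by auto
    have "t = inv (kap b h) \<otimes> kap b (h \<otimes> g)" using te I2[OF h bc g] by simp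
    moreover have "kap b h \<in> E" "kap b (h \<otimes> g) \<in> E" using E(3) b g h by auto
    ultimately show "t \<in> E" using subgroup.m_closed[OF sE] subgroup.m_inv_closed[OF sE] by auto
  qed
  then have "DD \<subseteq> E" unfolding DD_def by (rule generate_subgroup_incl[OF _ sE])
  then have EDe: "E = DD" using ED by auto
  have iD: "intv DD" using E(1) EDe by simp
  define C where "C = cent B DD <#> DD"
  have sC: "subgroup (cent B DD) G" by (rule cent_subgroup[OF sB Dc])
  have cm: "c \<otimes> e = e \<otimes> c" if "c \<in> cent B DD" "e \<in> DD" for c e
    using that unfolding cent_def by auto
  have sCC: "subgroup C G" unfolding C_def by (rule commuting_mult_subgroup[OF sC sD cm])
  have aC: "abelian_set G (cent B DD)" using abB cent_sub unfolding abelian_set_def by blast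
  have aD: "abelian_set G DD" using abD unfolding abelian_set_def by blast
  have abC: "abelian_set G C" unfolding C_def
    by (rule abelian_mult[OF subgroup.subset[OF sC] Dc aC aD cm])
  have "card C * card XX = card B * card XX"
    using K1(1)[OF iD] E(2) EDe unfolding C_def mm_def by simp
  then have cardC: "card C = card B" using cardX_pos by simp
  have nC: "C \<lhd> G"
  proof (rule normal_invI[OF sCC])
    fix x c assume x: "x \<in> carrier G" and c: "c \<in> C"
    then obtain z d where z: "z \<in> cent B DD" and d: "d \<in> DD" and ce: "c = z \<otimes> d"
      unfolding C_def set_mult_def by auto
    have zB: "z \<in> B" using z cent_sub by auto
    have zc: "z \<in> carrier G" and dc: "d \<in> carrier G" using zB d Bc Dc by auto
    have "x \<otimes> c \<otimes> inv x = sg x z \<otimes> sg x d" using ce I7[OF x zc dc] unfolding sg_def by simp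
    also have "\<dots> = z \<otimes> (kap (inv z) x \<otimes> sg x d)" using I3[OF x zc] x zc dc
      by (simp add: m_assoc kap_closed sg_closed)
    finally have e: "x \<otimes> c \<otimes> inv x = z \<otimes> (kap (inv z) x \<otimes> sg x d)" .
    have "kap (inv z) x \<in> DD" using kapD[OF subgroup.m_inv_closed[OF sB zB] x] .
    moreover have "sg x d \<in> DD" unfolding sg_def using normal.inv_op_closed2[OF nD x d] .
    ultimately have "kap (inv z) x \<otimes> sg x d \<in> DD" using subgroup.m_closed[OF sD] by auto
    then show "x \<otimes> c \<otimes> inv x \<in> C" unfolding e C_def set_mult_def using z by auto
  qed
  have Cnc: "C \<subseteq> nc" unfolding C_def
    by (rule mult_in_subgroup[OF snc]) (use cent_sub B_nc D_nc in auto)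
  show ?thesis using nC abC Cnc nc_N cardC unfolding nc_def by blast
qed

end

theorem mainTheorem19:
  fixes G :: "('a, 'b) monoid_scheme" and N B :: "'a set"
  assumes "group G"
    and "finite (carrier G)"
    and "metabelian G"
    and "N \<lhd> G"
    and "subgroup B G" and "B \<subseteq> N" and "abelian_set G B"
    and "\<And>A. subgroup A G \<Longrightarrow> A \<subseteq> N \<Longrightarrow> abelian_set G A \<Longrightarrow> card A \<le> card B"
  shows "\<exists>C. C \<lhd> G \<and> abelian_set G C \<and> C \<subseteq> normal_closure G B
             \<and> normal_closure G B \<subseteq> N \<and> card C = card B"
proof -
  interpret mt G N B
    by (rule mt.intro[OF assms(1) mt_axioms.intro]) (use assms in auto)
  show ?thesis by (rule main)
qed

end
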